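(* Let $\lambda\leq \frac{9}{10}$, $\epsilon>0$, $p>\frac{2}{\lambda\epsilon}$ a prime, and let $Y=Y_1+\dots+Y_{\ell}$ where the $Y_i$ are i.i.d. random variables taking values in $\mathbb{Z}_p$ whose distributions are upper-bounded by $\lambda$ (i.e. $\max_{x\in\mathbb{Z}_p}\mathbb{P}[Y_i=x]\leq\lambda$). Then, if $\ell$ is sufficiently large with respect to $\epsilon$, we have that $$\max_{x\in \mathbb{Z}_p} \mathbb{P}[Y=x]\leq \epsilon \lambda.$$ In particular, if $k_0$ is a positive integer such that $(C_3)^{k_0}<\epsilon\leq (C_3)^{k_0-1}$ and $\ell_0=3^{k_0}$, then $\max_{x\in \mathbb{Z}_p} \mathbb{P}[Y=x]\leq \epsilon \lambda$ holds for any $\ell\geq \ell_0$.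
   Context: Here $C_3<1$ is the absolute constant with the following property: for every $\lambda\leq \frac{9}{10}$ and prime $p>\frac{2}{\lambda}$, if $Y_1,Y_2,Y_3$ are identical and independent $\mathbb{Z}_p$-valued random variables with $\max_{x\in\mathbb{Z}_p}\mathbb{P}[Y_1=x]\leq\lambda$, then $\max_{x\in\mathbb{Z}_p}\mathbb{P}[Y_1+Y_2+Y_3=x]\leq C_3\lambda$ (one may take $C_3<1-1.3\cdot 10^{-12}$). *)

theory Defs
  imports "HOL-Probability.Probability"
begin

text \<open>Elements of Z_p are represented by the integers 0..p-1. A Z_p-valued
random variable is represented by its distribution, an int pmf supported in
{0..<p}.  The distribution of Y_1 + ... + Y_l (sum in Z_p) for i.i.d. Y_i with
distribution Y is the l-fold convolution modulo p.\<close>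

definition zp_valued :: "nat \<Rightarrow> int pmf \<Rightarrow> bool" where
  "zp_valued p Y \<longleftrightarrow> set_pmf Y \<subseteq> {0..<int p}"

primrec iid_sum_mod :: "nat \<Rightarrow> int pmf \<Rightarrow> nat \<Rightarrow> int pmf" where
  "iid_sum_mod p Y 0 = return_pmf 0"
| "iid_sum_mod p Y (Suc n) =
     bind_pmf (iid_sum_mod p Y n) (\<lambda>a. map_pmf (\<lambda>b. (a + b) mod int p) Y)"

definition C3_property :: "real \<Rightarrow> bool" where
  "C3_property C \<longleftrightarrow> C < 1 \<and>
     (\<forall>(lam::real) (p::nat) (Y::int pmf).
        lam \<le> 9/10 \<and> prime p \<and> real p > 2 / lam \<and> zp_valued p Y \<and>
        (\<forall>x. pmf Y x \<le> lam)
        \<longrightarrow> (\<forall>x. pmf (iid_sum_mod p Y 3) x \<le> C * lam))"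

end

theory Submission
  imports Defs
begin

lemma sum_support: "p > 0 \<Longrightarrow> set_pmf (iid_sum_mod p Y n) \<subseteq> {0..<int p}"
  by (induction n) auto

lemma sum_add: "iid_sum_mod p Y (m + n) =
   bind_pmf (iid_sum_mod p Y m) (\<lambda>a. map_pmf (\<lambda>b. (a + b) mod int p) (iid_sum_mod p Y n))"
  if "p > 0"
proof (induction n)
  case 0
  have "bind_pmf (iid_sum_mod p Y m) (\<lambda>a. map_pmf (\<lambda>b. (a + b) mod int p) (iid_sum_mod p Y 0))
      = bind_pmf (iid_sum_mod p Y m) return_pmf"
  proof (rule bind_pmf_cong)
    fix a assume "a \<in> set_pmf (iid_sum_mod p Y m)"
    then have "a \<in> {0..<int p}" using sum_support[OF that] by blast
    then show "map_pmf (\<lambda>b. (a + b) mod int p) (iid_sum_mod p Y 0) = return_pmf a"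
      by simp
  qed simp
  then show ?case by (simp add: bind_return_pmf')
next
  case (Suc n)
  have "iid_sum_mod p Y (m + Suc n) = bind_pmf (iid_sum_mod p Y (m + n)) (\<lambda>a. map_pmf (\<lambda>b. (a + b) mod int p) Y)"
    by simp
  also have "\<dots> = bind_pmf (iid_sum_mod p Y m) (\<lambda>a. bind_pmf (iid_sum_mod p Y n) (\<lambda>c. map_pmf (\<lambda>b. ((a + c) mod int p + b) mod int p) Y))"
    unfolding Suc by (simp add: bind_assoc_pmf bind_map_pmf)
  also have "\<dots> = bind_pmf (iid_sum_mod p Y m) (\<lambda>a. bind_pmf (iid_sum_mod p Y n) (\<lambda>c. map_pmf (\<lambda>b. (a + (c + b) mod int p) mod int p) Y))"
    by (simp add: mod_add_left_eq mod_add_right_eq add.assoc)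
  also have "\<dots> = bind_pmf (iid_sum_mod p Y m) (\<lambda>a. map_pmf (\<lambda>b. (a + b) mod int p) (iid_sum_mod p Y (Suc n)))"
    by (simp add: map_bind_pmf pmf.map_comp o_def)
  finally show ?case .
qed

lemma sum_mult: "p > 0 \<Longrightarrow> iid_sum_mod p (iid_sum_mod p Y n) m = iid_sum_mod p Y (n * m)"
proof (induction m)
  case 0 then show ?case by simp
next
  case (Suc m)
  then show ?case by (simp add: sum_add[symmetric] add.commute)
qed

lemma conv_bound:
  assumes "p > 0" "set_pmf Z \<subseteq> {0..<int p}" "\<And>x. pmf Z x \<le> c"
  shows "pmf (bind_pmf A (\<lambda>a. map_pmf (\<lambda>b. (a + b) mod int p) Z)) x \<le> c"
proof -
  have c0: "0 \<le> c" using assms(3) pmf_nonneg order_trans by metis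
  have key: "pmf (map_pmf (\<lambda>b. (a + b) mod int p) Z) x \<le> c" for a
  proof -
    let ?S = "(\<lambda>b. (a + b) mod int p) -` {x}"
    show ?thesis
    proof (cases "\<exists>b. b \<in> ?S \<inter> set_pmf Z")
      case False
      then have "?S \<inter> set_pmf Z = {}" by blast
      then have "measure (measure_pmf Z) ?S = 0"
        by (metis measure_Int_set_pmf measure_empty)
      then show ?thesis by (simp add: pmf_map c0)
    next
      case True
      then obtain b where b: "b \<in> ?S \<inter> set_pmf Z" by blast
      have "?S \<inter> set_pmf Z \<subseteq> {b}"
      proof
        fix b' assume b': "b' \<in> ?S \<inter> set_pmf Z"
        have r: "b \<in> {0..<int p}" "b' \<in> {0..<int p}" using b b' assms(2) by auto
        have "(a + b) mod int p = (a + b') mod int p" using b b' by simp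
        then have "b mod int p = b' mod int p"
          by (metis add_diff_cancel_left' mod_diff_left_eq)
        then have "b = b'" using r by simp
        then show "b' \<in> {b}" by simp
      qed
      then have "measure (measure_pmf Z) ?S \<le> measure (measure_pmf Z) {b}"
        by (metis measure_Int_set_pmf measure_pmf.finite_measure_mono sets_measure_pmf UNIV_I)
      then show ?thesis using assms(3)[of b] by (simp add: pmf_map measure_pmf_single)
    qed
  qed
  show ?thesis
    unfolding pmf_bind
    by (rule measure_pmf.integral_le_const)
       (auto intro!: key measure_pmf.integrable_const_bound[where B=1] simp: pmf_le_1)
qed
lemma C3_pos: assumes "C3_property C" shows "C > 0"
proof -
  define Y :: "int pmf" where "Y = pmf_of_set {0,1,2}"
  have sY: "set_pmf Y = {0,1,2}" unfolding Y_def by (simp add: set_pmf_of_set)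
  have zp: "zp_valued 3 Y" unfolding zp_valued_def sY by auto
  have b: "\<forall>x. pmf Y x \<le> 9/10"
    unfolding Y_def by (auto simp: pmf_of_set indicator_def)
  have "prime (3::nat)" by simp
  then have all: "\<forall>x. pmf (iid_sum_mod 3 Y 3) x \<le> C * (9/10)"
  proof -
    have "real (3::nat) > 2 / (9/10)" by simp
    then show ?thesis using assms zp b \<open>prime (3::nat)\<close> unfolding C3_property_def
      by (metis order_refl)
  qed
  obtain x where "x \<in> set_pmf (iid_sum_mod 3 Y 3)" using set_pmf_not_empty by fast
  then have "pmf (iid_sum_mod 3 Y 3) x > 0" by (simp add: pmf_positive)
  moreover have "pmf (iid_sum_mod 3 Y 3) x \<le> C * (9/10)" using all by blast
  ultimately show ?thesis by linarith
qed

lemma lam_pos: assumes "\<forall>x. pmf (Y::int pmf) x \<le> lam" shows "lam > 0"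
proof -
  obtain x where "x \<in> set_pmf Y" using set_pmf_not_empty by fast
  then have "pmf Y x > 0" by (simp add: pmf_positive)
  with assms show ?thesis by (smt (verit))
qed

lemma part2:
  assumes C: "C3_property C" and e: "eps > 0" "k0 \<ge> 1" "C ^ k0 < eps" "eps \<le> C ^ (k0 - 1)"
    and l: "l \<ge> 3 ^ k0" and lam: "lam \<le> 9/10" and p: "prime p" "real p > 2 / (lam * eps)"
    and zp: "zp_valued p Y" and Yb: "\<forall>x. pmf Y x \<le> lam"
  shows "pmf (iid_sum_mod p Y l) x \<le> eps * lam"
proof -
  have C0: "C > 0" using C3_pos[OF C] .
  have C1: "C < 1" using C unfolding C3_property_def by simp
  have lam0: "lam > 0" using lam_pos[OF Yb] .
  have p0: "p > 0" using p prime_gt_0_nat by blast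
  have sY: "set_pmf Y \<subseteq> {0..<int p}" using zp unfolding zp_valued_def .
  have chain: "\<forall>x. pmf (iid_sum_mod p Y (3 ^ j)) x \<le> C ^ j * lam" if "j \<le> k0" for j
    using that
  proof (induction j)
    case 0
    have "pmf (iid_sum_mod p Y (Suc 0)) x \<le> lam" for x
      using conv_bound[OF p0 sY, of lam "return_pmf 0"] Yb by simp
    then show ?case by simp
  next
    case (Suc j)
    let ?Z = "iid_sum_mod p Y (3 ^ j)"
    have IH: "\<forall>x. pmf ?Z x \<le> C ^ j * lam" using Suc by simp
    have "C ^ (k0 - 1) \<le> C ^ j"
      using Suc.prems C0 C1 by (intro power_decreasing) auto
    then have ge: "eps * lam \<le> C ^ j * lam" using e lam0 by (simp add: mult_right_mono)
    have "2 / (C ^ j * lam) \<le> 2 / (eps * lam)"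
      using ge e lam0 by (intro divide_left_mono) auto
    then have pl: "real p > 2 / (C ^ j * lam)" using p by (simp add: mult.commute)
    have "C ^ j \<le> 1" using C0 C1 by (simp add: power_le_one)
    then have "C ^ j * lam \<le> 9/10" using lam lam0
      by (metis mult_left_le_one_le less_imp_le order_trans zero_le_power C0)
    moreover have "zp_valued p ?Z" unfolding zp_valued_def using sum_support[OF p0] .
    ultimately have "\<forall>x. pmf (iid_sum_mod p ?Z 3) x \<le> C * (C ^ j * lam)"
      using C p IH pl unfolding C3_property_def by blast
    then show ?case using sum_mult[OF p0, of Y "3 ^ j" 3]
      by (simp add: mult.commute mult.left_commute)
  qed
  have fin: "\<forall>x. pmf (iid_sum_mod p Y (3 ^ k0)) x \<le> C ^ k0 * lam" using chain by simp
  have "iid_sum_mod p Y l = bind_pmf (iid_sum_mod p Y (l - 3 ^ k0))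
          (\<lambda>a. map_pmf (\<lambda>b. (a + b) mod int p) (iid_sum_mod p Y (3 ^ k0)))"
    using sum_add[OF p0, of Y "l - 3 ^ k0" "3 ^ k0"] l by simp
  then have "pmf (iid_sum_mod p Y l) x \<le> C ^ k0 * lam"
    using conv_bound[OF p0 sum_support[OF p0] , of Y "3 ^ k0" "C ^ k0 * lam"] fin by simp
  also have "\<dots> \<le> eps * lam" using e lam0 by simp
  finally show ?thesis .
qed
theorem theorem3p5:
  fixes C3 :: real
  assumes "C3_property C3"
  shows "(\<forall>eps::real. eps > 0 \<longrightarrow>
            (\<exists>L::nat. \<forall>l \<ge> L. \<forall>(lam::real) (p::nat) (Y::int pmf).
               lam \<le> 9/10 \<and> prime p \<and> real p > 2 / (lam * eps) \<and> zp_valued p Y \<and>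
               (\<forall>x. pmf Y x \<le> lam)
               \<longrightarrow> (\<forall>x. pmf (iid_sum_mod p Y l) x \<le> eps * lam)))
       \<and> (\<forall>(eps::real) (k0::nat) (l::nat) (lam::real) (p::nat) (Y::int pmf).
            eps > 0 \<and> k0 \<ge> 1 \<and> C3 ^ k0 < eps \<and> eps \<le> C3 ^ (k0 - 1) \<and> l \<ge> 3 ^ k0 \<and>
            lam \<le> 9/10 \<and> prime p \<and> real p > 2 / (lam * eps) \<and> zp_valued p Y \<and>
            (\<forall>x. pmf Y x \<le> lam)
            \<longrightarrow> (\<forall>x. pmf (iid_sum_mod p Y l) x \<le> eps * lam))"
proof
  have C0: "C3 > 0" using C3_pos[OF assms] .
  have C1: "C3 < 1" using assms unfolding C3_property_def by simp
  show P2: "\<forall>(eps::real) (k0::nat) (l::nat) (lam::real) (p::nat) (Y::int pmf).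
            eps > 0 \<and> k0 \<ge> 1 \<and> C3 ^ k0 < eps \<and> eps \<le> C3 ^ (k0 - 1) \<and> l \<ge> 3 ^ k0 \<and>
            lam \<le> 9/10 \<and> prime p \<and> real p > 2 / (lam * eps) \<and> zp_valued p Y \<and>
            (\<forall>x. pmf Y x \<le> lam)
            \<longrightarrow> (\<forall>x. pmf (iid_sum_mod p Y l) x \<le> eps * lam)"
    using part2[OF assms] by blast
  show "\<forall>eps::real. eps > 0 \<longrightarrow>
            (\<exists>L::nat. \<forall>l \<ge> L. \<forall>(lam::real) (p::nat) (Y::int pmf).
               lam \<le> 9/10 \<and> prime p \<and> real p > 2 / (lam * eps) \<and> zp_valued p Y \<and>
               (\<forall>x. pmf Y x \<le> lam)
               \<longrightarrow> (\<forall>x. pmf (iid_sum_mod p Y l) x \<le> eps * lam))"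
  proof (intro allI impI)
    fix eps :: real assume e: "eps > 0"
    show "\<exists>L::nat. \<forall>l \<ge> L. \<forall>(lam::real) (p::nat) (Y::int pmf).
               lam \<le> 9/10 \<and> prime p \<and> real p > 2 / (lam * eps) \<and> zp_valued p Y \<and>
               (\<forall>x. pmf Y x \<le> lam)
               \<longrightarrow> (\<forall>x. pmf (iid_sum_mod p Y l) x \<le> eps * lam)"
    proof (cases "eps > 1")
      case True
      show ?thesis
      proof (intro exI[of _ 1] allI impI, elim conjE)
        fix l :: nat and lam p Y x
        assume l: "1 \<le> l" and *: "prime p" "zp_valued p Y" "\<forall>x. pmf Y x \<le> lam"
        have p0: "p > 0" using * prime_gt_0_nat by blast
        have lam0: "lam > 0" using lam_pos *(3) by blast
        obtain n where n: "l = Suc n" using l by (cases l) auto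
        have "pmf (iid_sum_mod p Y l) x \<le> lam"
          unfolding n using conv_bound[OF p0, of Y lam] *(2,3) unfolding zp_valued_def by simp
        also have "\<dots> \<le> eps * lam" using True lam0 by simp
        finally show "pmf (iid_sum_mod p Y l) x \<le> eps * lam" .
      qed
    next
      case False
      obtain k where k: "C3 ^ k < eps" using real_arch_pow_inv[OF e C1] by blast
      define k0 where "k0 = (LEAST k. C3 ^ k < eps)"
      have k0: "C3 ^ k0 < eps" unfolding k0_def using k by (rule LeastI)
      have k1: "k0 \<ge> 1" using k0 False by (cases k0) auto
      have k2: "eps \<le> C3 ^ (k0 - 1)"
      proof -
        have "\<not> C3 ^ (k0 - 1) < eps" unfolding k0_def
          by (rule not_less_Least) (use k1 in \<open>simp add: k0_def\<close>)
        then show ?thesis by simp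
      qed
      show ?thesis
        using P2 e k0 k1 k2 by (intro exI[of _ "3 ^ k0"]) blast
    qed
  qed
qed

end
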